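(* Let $A$ be a finite cyclic group and let $(a_1,\ldots,a_k)$ be an admissible $k$-tuple in $A$. Then for every permutation $\sigma\in S_k$ there exists $\psi\in\operatorname{Aut}(A)$ with $\psi(a_i)=a_{\sigma(i)}$ for all $i$ if and only if one of the following holds: (i) there is an isomorphism $\delta:A\to\mathbb{Z}/n\mathbb{Z}$ with $k\equiv 0\pmod n$ such that $\delta(a_i)=1$ for all $i$; or (ii) $k=2$ and there is an isomorphism $\delta:A\to\mathbb{Z}/n\mathbb{Z}$ for some $n\ge 3$ such that $\delta(a_1)=1$ and $\delta(a_2)=-1$.
   Context: For a finite abelian group $A$, an admissible $k$-tuple is a tuple $(a_1,\ldots,a_k)\in(A\setminus\{0\})^k$ such that $\sum_{i=1}^k a_i=0$ and $\{a_1,\ldots,a_k\}$ is a generating set for $A$. *)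

theory Defs
  imports "HOL-Algebra.Algebra" "HOL-Combinatorics.Permutations"
begin

definition admissible :: "('a, 'b) monoid_scheme \<Rightarrow> nat \<Rightarrow> (nat \<Rightarrow> 'a) \<Rightarrow> bool" where
  "admissible G k a \<longleftrightarrow>
     (\<forall>i<k. a i \<in> carrier G \<and> a i \<noteq> \<one>\<^bsub>G\<^esub>) \<and>
     finprod G a {..<k} = \<one>\<^bsub>G\<^esub> \<and>
     generate G (a ` {..<k}) = carrier G"

end

theory Submission imports Defs begin



lemma iso_to_Zn:
  assumes G: "group G" and fin: "finite (carrier G)" and g: "g \<in> carrier G"
    and gen: "generate G {g} = carrier G"
  shows "\<exists>\<delta> \<in> iso G (integer_mod_group (card (carrier G))).
           \<delta> g = 1 mod int (card (carrier G))"
proof -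
  interpret G: group G by (rule G)
  define n where "n = card (carrier G)"
  have ordg: "G.ord g = n" using G.generate_pow_card[OF g] gen n_def by simp
  have npos: "n > 0" using fin g n_def card_gt_0_iff by blast
  define h where "h = (\<lambda>m::int. g [^]\<^bsub>G\<^esub> m)"
  have heq: "h x = h y \<longleftrightarrow> int n dvd (y - x)" for x y
    unfolding h_def using G.int_pow_eq[OF g] ordg by simp
  have Zc: "carrier (integer_mod_group n) = {0..<int n}"
    using npos by (simp add: carrier_integer_mod_group)
  have inj: "inj_on h {0..<int n}"
  proof (rule inj_onI)
    fix x y assume "x \<in> {0..<int n}" "y \<in> {0..<int n}" "h x = h y"
    then have "int n dvd (y - x)" "0 \<le> x" "x < int n" "0 \<le> y" "y < int n"
      using heq by auto
    then have "x mod int n = y mod int n" by (metis mod_eq_dvd_iff dvd_diff_commute)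
    moreover have "x mod int n = x" "y mod int n = y"
      using \<open>0 \<le> x\<close> \<open>x < int n\<close> \<open>0 \<le> y\<close> \<open>y < int n\<close> by simp_all
    ultimately show "x = y" by simp
  qed
  have sub: "h ` {0..<int n} \<subseteq> carrier G" unfolding h_def using g by auto
  have "card (h ` {0..<int n}) = n" using card_image[OF inj] by simp
  then have img: "h ` {0..<int n} = carrier G"
    using card_subset_eq[OF fin sub] n_def by simp
  have bij: "bij_betw h (carrier (integer_mod_group n)) (carrier G)"
    using inj img Zc by (simp add: bij_betw_def)
  have hom: "h \<in> hom (integer_mod_group n) G"
  proof (rule homI)
    fix x assume "x \<in> carrier (integer_mod_group n)"
    then show "h x \<in> carrier G" unfolding h_def using g by simp
  next
    fix x y
    have "h ((x + y) mod int n) = h (x + y)"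
      using heq by (simp add: mod_eq_dvd_iff[symmetric]) 
    also have "\<dots> = h x \<otimes>\<^bsub>G\<^esub> h y" unfolding h_def using G.int_pow_mult[OF g] by simp
    finally show "h (x \<otimes>\<^bsub>integer_mod_group n\<^esub> y) = h x \<otimes>\<^bsub>G\<^esub> h y" by simp
  qed
  have iso: "h \<in> iso (integer_mod_group n) G" using hom bij by (simp add: iso_def)
  have iso2: "inv_into (carrier (integer_mod_group n)) h \<in> iso G (integer_mod_group n)"
    using group.iso_set_sym[OF group_integer_mod_group iso] .
  have "h (1 mod int n) = h 1" using heq by (simp add: mod_eq_dvd_iff[symmetric])
  also have "h 1 = g" unfolding h_def using g by simp
  finally have h1: "h (1 mod int n) = g" .
  have "1 mod int n \<in> carrier (integer_mod_group n)" using Zc npos by simp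
  then have "inv_into (carrier (integer_mod_group n)) h g = 1 mod int n"
    using h1 inv_into_f_f[OF inj] Zc by metis
  then show ?thesis using iso2 n_def by blast
qed

lemma cyclic_hom_comm:
  assumes G: "group G" and cyc: "cyclic_group G" and h1: "f \<in> hom G G" and h2: "h \<in> hom G G"
    and x: "x \<in> carrier G"
  shows "f (h x) = h (f x)"
proof -
  interpret G: group G by (rule G)
  obtain g where g: "g \<in> carrier G" and car: "carrier G = range (\<lambda>m::int. g [^]\<^bsub>G\<^esub> m)"
    using cyc G.cyclic_group by blast
  have fg: "f g \<in> carrier G" "h g \<in> carrier G" using g h1 h2 by (auto simp: hom_def)
  obtain u where u: "f g = g [^]\<^bsub>G\<^esub> (u::int)" using fg car by auto
  obtain v where v: "h g = g [^]\<^bsub>G\<^esub> (v::int)" using fg car by auto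
  obtain m where m: "x = g [^]\<^bsub>G\<^esub> (m::int)" using x car by auto
  have "f (h x) = g [^]\<^bsub>G\<^esub> (u * (v * m))"
    using m hom_int_pow[OF h2 g G G] hom_int_pow[OF h1 _ G G] v u g G.int_pow_pow
    by (simp add: G.int_pow_pow)
  moreover have "h (f x) = g [^]\<^bsub>G\<^esub> (v * (u * m))"
    using m hom_int_pow[OF h2 _ G G] hom_int_pow[OF h1 g G G] v u g G.int_pow_pow
    by (simp add: G.int_pow_pow)
  ultimately show ?thesis by (simp add: ac_simps)
qed

lemma inv_iso:
  assumes G: "comm_group G"
  shows "(\<lambda>x. inv\<^bsub>G\<^esub> x) \<in> iso G G"
proof -
  interpret G: comm_group G by (rule G)
  have "(\<lambda>x. inv\<^bsub>G\<^esub> x) \<in> hom G G"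
    by (rule homI) (auto simp: G.inv_mult)
  moreover have "bij_betw (\<lambda>x. inv\<^bsub>G\<^esub> x) (carrier G) (carrier G)"
    by (rule bij_betwI[where g="\<lambda>x. inv\<^bsub>G\<^esub> x"]) auto
  ultimately show ?thesis by (simp add: iso_def)
qed

theorem lemma2p2:
  fixes G :: "('a, 'b) monoid_scheme" and k :: nat and a :: "nat \<Rightarrow> 'a"
  assumes "comm_group G" and "finite (carrier G)" and "cyclic_group G"
    and "admissible G k a"
  shows "(\<forall>\<sigma>. \<sigma> permutes {..<k} \<longrightarrow>
            (\<exists>\<psi> \<in> iso G G. \<forall>i<k. \<psi> (a i) = a (\<sigma> i)))
     \<longleftrightarrow>
     ((\<exists>(n::nat) \<delta>. n > 0 \<and> \<delta> \<in> iso G (integer_mod_group n) \<and> k mod n = 0 \<and>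
          (\<forall>i<k. \<delta> (a i) = 1 mod int n))
      \<or>
      (k = 2 \<and> (\<exists>(n::nat) \<delta>. n \<ge> 3 \<and> \<delta> \<in> iso G (integer_mod_group n) \<and>
          \<delta> (a 0) = 1 mod int n \<and> \<delta> (a 1) = (-1) mod int n)))"
proof -
  interpret G: comm_group G by (rule assms(1))
  have fin: "finite (carrier G)" by (rule assms(2))
  have A1: "\<And>i. i < k \<Longrightarrow> a i \<in> carrier G \<and> a i \<noteq> \<one>\<^bsub>G\<^esub>"
    and A2: "finprod G a {..<k} = \<one>\<^bsub>G\<^esub>"
    and A3: "generate G (a ` {..<k}) = carrier G"
    using assms(4) unfolding admissible_def by auto
  have Acar: "a \<in> {..<k} \<rightarrow> carrier G" using A1 by auto
  have two: "k = 2 \<Longrightarrow> a 0 \<otimes>\<^bsub>G\<^esub> a 1 = \<one>\<^bsub>G\<^esub>"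
  proof -
    assume k2: "k = 2"
    have "{..<k} = insert 0 {1}" using k2 by auto
    then have "finprod G a {..<k} = a 0 \<otimes>\<^bsub>G\<^esub> a 1"
      using A1 k2 by simp
    then show ?thesis using A2 by simp
  qed
  show ?thesis
  proof
    assume L: "\<forall>\<sigma>. \<sigma> permutes {..<k} \<longrightarrow> (\<exists>\<psi> \<in> iso G G. \<forall>i<k. \<psi> (a i) = a (\<sigma> i))"
    define n where "n = card (carrier G)"
    have npos: "n > 0" using fin n_def card_gt_0_iff by blast
    show "(\<exists>(n::nat) \<delta>. n > 0 \<and> \<delta> \<in> iso G (integer_mod_group n) \<and> k mod n = 0 \<and>
          (\<forall>i<k. \<delta> (a i) = 1 mod int n))
      \<or>
      (k = 2 \<and> (\<exists>(n::nat) \<delta>. n \<ge> 3 \<and> \<delta> \<in> iso G (integer_mod_group n) \<and>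
          \<delta> (a 0) = 1 mod int n \<and> \<delta> (a 1) = (-1) mod int n))"
    proof (cases "\<forall>i<k. \<forall>j<k. a i = a j")
      case True
      define g where "g = (if k = 0 then \<one>\<^bsub>G\<^esub> else a 0)"
      have g: "g \<in> carrier G" using A1 g_def by auto
      have ai: "a i = g" if "i < k" for i
      proof -
        have "k \<noteq> 0" "0 < k" using that by auto
        moreover have "a i = a 0" using True that \<open>0 < k\<close> by blast
        ultimately show ?thesis unfolding g_def by simp
      qed
      have gen: "generate G {g} = carrier G"
      proof (cases "k = 0")
        case True
        then show ?thesis using A3 g_def G.generate_one G.generate_empty by simp
      next
        case False
        then have "a ` {..<k} = {g}" using ai by auto
        then show ?thesis using A3 by simp
      qed
      have "finprod G a {..<k} = finprod G (\<lambda>_. g) {..<k}"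
        by (rule G.finprod_cong') (auto simp: ai g)
      moreover have "finprod G (\<lambda>_. g) {..<k} = g [^]\<^bsub>G\<^esub> k"
        using G.finprod_const[OF g, of "{..<k}"] by simp
      ultimately have "g [^]\<^bsub>G\<^esub> k = \<one>\<^bsub>G\<^esub>" using A2 by simp
      moreover have "G.ord g = n" using G.generate_pow_card[OF g] gen n_def by simp
      ultimately have "n dvd k" using G.pow_eq_id[OF g] by simp
      obtain \<delta> where d: "\<delta> \<in> iso G (integer_mod_group n)" "\<delta> g = 1 mod int n"
        using iso_to_Zn[OF G.is_group fin g gen] n_def by blast
      have "\<forall>i<k. \<delta> (a i) = 1 mod int n" using d(2) ai by simp
      moreover have "k mod n = 0" using \<open>n dvd k\<close> by simp
      ultimately have "n > 0 \<and> \<delta> \<in> iso G (integer_mod_group n) \<and> k mod n = 0 \<and>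
          (\<forall>i<k. \<delta> (a i) = 1 mod int n)" using npos d(1) by simp
      then show ?thesis by (intro disjI1 exI)
    next
      case False
      then obtain i j where ij: "i < k" "j < k" "a i \<noteq> a j" by blast
      then have "i \<noteq> j" by auto
      have k2: "k = 2"
      proof (rule ccontr)
        assume "k \<noteq> 2"
        then have k3: "k \<ge> 3" using ij \<open>i \<noteq> j\<close> by linarith
        define l where "l = (if 0 \<notin> {i,j} then 0 else if 1 \<notin> {i,j} then 1 else (2::nat))"
        have l: "l < k" "l \<noteq> i" "l \<noteq> j" using k3 \<open>i \<noteq> j\<close> unfolding l_def by auto
        obtain \<psi>1 where p1: "\<psi>1 \<in> iso G G" "\<forall>m<k. \<psi>1 (a m) = a (Transposition.transpose i j m)"
          using L permutes_swap_id[of i "{..<k}" j] ij by auto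
        obtain \<psi>2 where p2: "\<psi>2 \<in> iso G G" "\<forall>m<k. \<psi>2 (a m) = a (Transposition.transpose j l m)"
          using L permutes_swap_id[of j "{..<k}" l] ij l by auto
        have "\<psi>1 (\<psi>2 (a l)) = \<psi>2 (\<psi>1 (a l))"
          using cyclic_hom_comm[OF G.is_group assms(3), of \<psi>1 \<psi>2 "a l"] p1 p2 A1 l
          by (auto simp: iso_def)
        moreover have "\<psi>1 (\<psi>2 (a l)) = a i" using p1 p2 l ij by simp
        moreover have "\<psi>2 (\<psi>1 (a l)) = a j" using p1 p2 l ij by simp
        ultimately show False using ij by simp
      qed
      have a0: "a 0 \<in> carrier G" "a 1 \<in> carrier G" using A1 k2 by auto
      have "a 1 \<otimes>\<^bsub>G\<^esub> a 0 = \<one>\<^bsub>G\<^esub>" using two[OF k2] a0 G.m_comm by metis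
      then have a1: "a 1 = inv\<^bsub>G\<^esub> (a 0)" using G.inv_equality a0 by metis
      have "i \<in> {0,1}" "j \<in> {0,1}" using ij k2 by auto
      then have ne: "a 0 \<noteq> a 1" using ij \<open>i \<noteq> j\<close> by auto
      have "a ` {..<k} = {a 0, a 1}" using k2 by (auto simp: lessThan_Suc numeral_2_eq_2)
      then have "carrier G = generate G {a 0, a 1}" using A3 by simp
      also have "\<dots> \<subseteq> generate G {a 0}"
        using a0 a1 G.generate_subgroup_incl[OF _ G.generate_is_subgroup, of "{a 0, a 1}" "{a 0}"]
          generate.incl[of "a 0" "{a 0}" G] generate.inv[of "a 0" "{a 0}" G]
        by auto
      finally have gen: "generate G {a 0} = carrier G"
        using G.generate_incl[of "{a 0}"] a0 by auto
      have ordg: "G.ord (a 0) = n" using G.generate_pow_card[OF a0(1)] gen n_def by simp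
      have "\<not> n dvd 2"
      proof
        assume "n dvd 2"
        then have "a 0 [^]\<^bsub>G\<^esub> (2::nat) = \<one>\<^bsub>G\<^esub>" using G.pow_eq_id[OF a0(1)] ordg by simp
        then have "a 0 \<otimes>\<^bsub>G\<^esub> a 0 = \<one>\<^bsub>G\<^esub>" using a0 by (simp add: numeral_2_eq_2 G.nat_pow_Suc2)
        then have "a 1 = a 0" using a1 a0 G.inv_equality by metis
        then show False using ne by simp
      qed
      then have "n \<noteq> 1" "n \<noteq> 2" by auto
      then have n3: "n \<ge> 3" using npos by linarith
      obtain \<delta> where d: "\<delta> \<in> iso G (integer_mod_group n)" "\<delta> (a 0) = 1 mod int n"
        using iso_to_Zn[OF G.is_group fin a0(1) gen] n_def by blast
      have gh: "group_hom G (integer_mod_group n) \<delta>"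
        using d(1) by (simp add: group_hom_def group_hom_axioms_def iso_def G.is_group)
      have "\<delta> (a 1) = inv\<^bsub>integer_mod_group n\<^esub> (\<delta> (a 0))"
        using group_hom.hom_inv[OF gh a0(1)] a1 by simp
      also have "\<dots> = (-1) mod int n" using d(2) n3 by (simp add: carrier_integer_mod_group)
      finally show ?thesis using k2 n3 d by blast
    qed
  next
    assume R: "(\<exists>(n::nat) \<delta>. n > 0 \<and> \<delta> \<in> iso G (integer_mod_group n) \<and> k mod n = 0 \<and>
          (\<forall>i<k. \<delta> (a i) = 1 mod int n))
      \<or>
      (k = 2 \<and> (\<exists>(n::nat) \<delta>. n \<ge> 3 \<and> \<delta> \<in> iso G (integer_mod_group n) \<and>
          \<delta> (a 0) = 1 mod int n \<and> \<delta> (a 1) = (-1) mod int n))"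
    show "\<forall>\<sigma>. \<sigma> permutes {..<k} \<longrightarrow> (\<exists>\<psi> \<in> iso G G. \<forall>i<k. \<psi> (a i) = a (\<sigma> i))"
    proof (intro allI impI)
      fix \<sigma> assume s: "\<sigma> permutes {..<k}"
      have sk: "\<And>i. i < k \<Longrightarrow> \<sigma> i < k" using permutes_in_image[OF s] by simp
      show "\<exists>\<psi> \<in> iso G G. \<forall>i<k. \<psi> (a i) = a (\<sigma> i)"
        using R
      proof
        assume "\<exists>(n::nat) \<delta>. n > 0 \<and> \<delta> \<in> iso G (integer_mod_group n) \<and> k mod n = 0 \<and>
          (\<forall>i<k. \<delta> (a i) = 1 mod int n)"
        then obtain n \<delta> where d: "\<delta> \<in> iso G (integer_mod_group n)" "\<forall>i<k. \<delta> (a i) = 1 mod int n"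
          by blast
        have inj: "inj_on \<delta> (carrier G)" using d(1) by (simp add: iso_def bij_betw_def)
        have "\<forall>i<k. a i = a (\<sigma> i)"
        proof (intro allI impI)
          fix i assume "i < k"
          then have "\<sigma> i < k" using sk by simp
          then have "\<delta> (a i) = \<delta> (a (\<sigma> i))" "a i \<in> carrier G" "a (\<sigma> i) \<in> carrier G"
            using \<open>i < k\<close> d(2) A1 by auto
          then show "a i = a (\<sigma> i)" using inj_onD[OF inj] by blast
        qed
        then show ?thesis using iso_set_refl[of G] by (intro bexI[of _ "\<lambda>x. x"]) auto
      next
        assume "k = 2 \<and> (\<exists>(n::nat) \<delta>. n \<ge> 3 \<and> \<delta> \<in> iso G (integer_mod_group n) \<and>
          \<delta> (a 0) = 1 mod int n \<and> \<delta> (a 1) = (-1) mod int n)"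
        then have k2: "k = 2" by simp
        have a0: "a 0 \<in> carrier G" "a 1 \<in> carrier G" using A1 k2 by auto
        have "a 1 \<otimes>\<^bsub>G\<^esub> a 0 = \<one>\<^bsub>G\<^esub>" using two[OF k2] a0 G.m_comm by metis
      then have a1: "a 1 = inv\<^bsub>G\<^esub> (a 0)" using G.inv_equality a0 by metis
        have a0': "a 0 = inv\<^bsub>G\<^esub> (a 1)" using a1 a0 by simp
        have inj: "inj_on \<sigma> {..<k}" using permutes_inj_on[OF s] .
        have "\<sigma> 0 < 2" "\<sigma> 1 < 2" "\<sigma> 0 \<noteq> \<sigma> 1" using sk k2 inj_onD[OF inj, of 0 1] by auto
        then consider "\<sigma> 0 = 0" "\<sigma> 1 = 1" | "\<sigma> 0 = 1" "\<sigma> 1 = 0" by linarith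
        then show ?thesis
        proof cases
          case 1
          have "\<And>i. i < k \<Longrightarrow> i = 0 \<or> i = 1" using k2 by auto
          then have "\<forall>i<k. a i = a (\<sigma> i)" using 1 by (metis One_nat_def)
          then show ?thesis using iso_set_refl[of G] by (intro bexI[of _ "\<lambda>x. x"]) auto
        next
          case 2
          have "\<And>i. i < k \<Longrightarrow> i = 0 \<or> i = 1" using k2 by auto
          then have "\<forall>i<k. inv\<^bsub>G\<^esub> (a i) = a (\<sigma> i)" using 2 a1 a0' by (metis One_nat_def)
          then show ?thesis using inv_iso[OF assms(1)] by (intro bexI[of _ "\<lambda>x. inv\<^bsub>G\<^esub> x"]) auto
        qed
      qed
    qed
  qed
qed
end
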